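(* Under the hypotheses of Theorem 2 (NEAR-DGD$^t$ from a common initial point $s_0$, so $x_{i,0}=y_{i,0}=s_0$; each $f_i$ $\mu_i$-strongly convex with $L_i$-Lipschitz gradient; $0<\alpha\le\min\{1/L,c_4\}$), with $\alpha c_2<1$, $\delta=\frac{c_2}{2(1-\alpha c_2)}$, $c_1=\sqrt{1-\alpha c_2/2}$ and $c_3=\sqrt{\alpha(\alpha+\delta^{-1})}\,DL$, for all $k=0,1,2,\ldots$ and $1\le i\le n$: $$\|x_{i,k}-x^\star\|\le c_1^k\|s_0-x^\star\|+\frac{c_3}{\sqrt{1-c_1^2}}\beta^t+\beta^tD,$$ $$\|y_{i,k}-x^\star\|\le c_1^k\|s_0-x^\star\|+\frac{c_3}{\sqrt{1-c_1^2}}\beta^t+\beta^tD+2D.$$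
   Context: NEAR-DGD$^t$: $\mathbf{x}_k=(\mathbf{W}^t\otimes I_p)\mathbf{y}_k$, $\mathbf{y}_{k+1}=\mathbf{x}_k-\alpha\nabla\mathbf{f}(\mathbf{x}_k)$, $\nabla\mathbf{f}(\mathbf{x})=(\nabla f_1(x_1);\ldots;\nabla f_n(x_n))$, with $\mathbf{W}$ a symmetric doubly-stochastic matrix of a connected network ($w_{ii}>0$, $w_{ij}>0$ iff neighbours), simple eigenvalue $1$, other eigenvalues in $(-1,1)$, $\beta\in(0,1)$ its second largest eigenvalue magnitude. $x^\star$ is the minimizer of $h=\sum_if_i$. $L=\max_iL_i$, $\mu_{\bar f}=\frac1n\sum_i\mu_i$, $L_{\bar f}=\frac1n\sum_iL_i$, $c_2=\frac{2\mu_{\bar f}L_{\bar f}}{\mu_{\bar f}+L_{\bar f}}$, $c_4=\frac{2}{\mu_{\bar f}+L_{\bar f}}$, $D=\|\mathbf{y}_0-\mathbf{u}^\star\|+\frac{\nu+4}{\nu}\|\mathbf{u}^\star\|$, $\mathbf{u}^\star=(\arg\min f_1;\ldots;\arg\min f_n)$, $\nu=2\alpha\min_i\frac{\mu_iL_i}{\mu_i+L_i}$. *)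

theory Defs
  imports "HOL-Analysis.Analysis"
begin

primrec matpow :: "real^'n^'n \<Rightarrow> nat \<Rightarrow> real^'n^'n" where
  "matpow A 0 = mat 1"
| "matpow A (Suc k) = A ** matpow A k"

definition strongly_convex :: "real \<Rightarrow> ('a::real_normed_vector \<Rightarrow> real) \<Rightarrow> bool" where
  "strongly_convex \<mu> f \<longleftrightarrow>
     (\<forall>x y. \<forall>\<theta>::real. 0 \<le> \<theta> \<and> \<theta> \<le> 1 \<longrightarrow>
        f (\<theta> *\<^sub>R x + (1 - \<theta>) *\<^sub>R y)
          \<le> \<theta> * f x + (1 - \<theta>) * f y - \<mu> / 2 * \<theta> * (1 - \<theta>) * (norm (x - y))\<^sup>2)"

definition is_eigenvalue :: "real^'n^'n \<Rightarrow> real \<Rightarrow> bool" where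
  "is_eigenvalue A l \<longleftrightarrow> (\<exists>v. v \<noteq> 0 \<and> A *v v = l *\<^sub>R v)"

text \<open>Second largest eigenvalue magnitude, given that 1 is a simple eigenvalue.\<close>
definition second_eig_mag :: "real^'n^'n \<Rightarrow> real" where
  "second_eig_mag A = Max {\<bar>l\<bar> | l. is_eigenvalue A l \<and> l \<noteq> 1}"

text \<open>NEAR-DGD^t iterates: x_k = (W^t \<otimes> I_p) y_k, y_{k+1} = x_k - alpha grad f(x_k),
  started from y_{i,0} = s0 for every agent i.\<close>
definition near_dgd_iter ::
  "real^'n^'n \<Rightarrow> nat \<Rightarrow> real \<Rightarrow> ('n \<Rightarrow> 'a::real_normed_vector \<Rightarrow> 'a) \<Rightarrow> 'a
   \<Rightarrow> (nat \<Rightarrow> 'n \<Rightarrow> 'a) \<Rightarrow> (nat \<Rightarrow> 'n \<Rightarrow> 'a) \<Rightarrow> bool" where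
  "near_dgd_iter W t \<alpha> g s0 x y \<longleftrightarrow>
     (\<forall>i. y 0 i = s0) \<and>
     (\<forall>k i. x k i = (\<Sum>j\<in>UNIV. (matpow W t) $ i $ j *\<^sub>R y k j)) \<and>
     (\<forall>k i. y (Suc k) i = x k i - \<alpha> *\<^sub>R g i (x k i))"

end

theory Submission
  imports Defs
begin

lemma line_deriv:
  fixes f :: "'a::euclidean_space \<Rightarrow> real"
  assumes "(f has_derivative (\<lambda>h. g (x + s *\<^sub>R d) \<bullet> h)) (at (x + s *\<^sub>R d))"
  shows "((\<lambda>s. f (x + s *\<^sub>R d)) has_real_derivative (g (x + s *\<^sub>R d) \<bullet> d)) (at s)"
proof -
  have l: "((\<lambda>s. x + s *\<^sub>R d) has_derivative (\<lambda>t. t *\<^sub>R d)) (at s)"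
    by (auto intro!: derivative_eq_intros)
  have "((\<lambda>s. f (x + s *\<^sub>R d)) has_derivative (\<lambda>t. g (x + s *\<^sub>R d) \<bullet> (t *\<^sub>R d))) (at s)"
    using has_derivative_compose[OF l assms] by simp
  moreover have "(\<lambda>t. g (x + s *\<^sub>R d) \<bullet> (t *\<^sub>R d)) = (*) (g (x + s *\<^sub>R d) \<bullet> d)"
    by (auto simp: fun_eq_iff)
  ultimately show ?thesis by (simp add: has_field_derivative_def)
qed

lemma sc_grad:
  fixes f :: "'a::euclidean_space \<Rightarrow> real"
  assumes sc: "strongly_convex \<mu> f"
    and der: "(f has_derivative (\<lambda>h. g x \<bullet> h)) (at x)"
  shows "f x + g x \<bullet> (y - x) + \<mu> / 2 * (norm (y - x))\<^sup>2 \<le> f y"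
proof -
  define d where "d = y - x"
  have D: "((\<lambda>s. f (x + s *\<^sub>R d)) has_real_derivative (g x \<bullet> d)) (at 0)"
    using line_deriv[of f g x 0 d] der by simp
  hence T1: "((\<lambda>h. (f (x + (0 + h) *\<^sub>R d) - f (x + 0 *\<^sub>R d)) / h) \<longlongrightarrow> g x \<bullet> d) (at 0)"
    by (simp add: DERIV_def)
  hence T1': "((\<lambda>h. (f (x + h *\<^sub>R d) - f x) / h) \<longlongrightarrow> g x \<bullet> d) (at_right 0)"
    by (auto intro: tendsto_mono[OF at_le])
  have T2: "((\<lambda>h. f y - f x - \<mu> / 2 * (1 - h) * (norm d)\<^sup>2) \<longlongrightarrow> f y - f x - \<mu> / 2 * (1 - 0) * (norm d)\<^sup>2) (at_right 0)"
    by (intro tendsto_intros)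
  have ev: "eventually (\<lambda>h. (f (x + h *\<^sub>R d) - f x) / h \<le> f y - f x - \<mu> / 2 * (1 - h) * (norm d)\<^sup>2) (at_right (0::real))"
    unfolding eventually_at_right_field
  proof (intro exI[of _ 1] conjI allI impI)
    fix h :: real assume h: "0 < h" "h < 1"
    have "f (h *\<^sub>R y + (1 - h) *\<^sub>R x) \<le> h * f y + (1 - h) * f x - \<mu> / 2 * h * (1 - h) * (norm (y - x))\<^sup>2"
      using sc h unfolding strongly_convex_def by auto
    moreover have "h *\<^sub>R y + (1 - h) *\<^sub>R x = x + h *\<^sub>R d" by (simp add: d_def algebra_simps)
    ultimately have "f (x + h *\<^sub>R d) - f x \<le> h * (f y - f x - \<mu> / 2 * (1 - h) * (norm d)\<^sup>2)"
      by (simp add: d_def algebra_simps)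
    thus "(f (x + h *\<^sub>R d) - f x) / h \<le> f y - f x - \<mu> / 2 * (1 - h) * (norm d)\<^sup>2"
      using h by (simp add: divide_le_eq mult.commute)
  qed simp
  have "g x \<bullet> d \<le> f y - f x - \<mu> / 2 * (1 - 0) * (norm d)\<^sup>2"
    using tendsto_le[OF trivial_limit_at_right_real T2 T1' ev] .
  thus ?thesis by (simp add: d_def)
qed

lemma descent:
  fixes f :: "'a::euclidean_space \<Rightarrow> real"
  assumes der: "\<forall>z. (f has_derivative (\<lambda>h. g z \<bullet> h)) (at z)"
    and lip: "lipschitz_on L UNIV g"
  shows "f y \<le> f x + g x \<bullet> (y - x) + L / 2 * (norm (y - x))\<^sup>2"
proof -
  define d where "d = y - x"
  define \<psi> where "\<psi> s = f (x + s *\<^sub>R d) - s * (g x \<bullet> d) - L / 2 * s\<^sup>2 * (norm d)\<^sup>2" for s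
  have "\<psi> 1 \<le> \<psi> 0"
  proof (rule DERIV_nonpos_imp_nonincreasing[of 0 1 \<psi>])
    fix s :: real assume s: "0 \<le> s" "s \<le> 1"
    have "(\<psi> has_real_derivative (g (x + s *\<^sub>R d) \<bullet> d - g x \<bullet> d - L / 2 * (2 * s) * (norm d)\<^sup>2)) (at s)"
      unfolding \<psi>_def
      using line_deriv[of f g x s d] der
      by (auto intro!: derivative_eq_intros)
    moreover have "g (x + s *\<^sub>R d) \<bullet> d - g x \<bullet> d - L / 2 * (2 * s) * (norm d)\<^sup>2 \<le> 0"
    proof -
      have "g (x + s *\<^sub>R d) \<bullet> d - g x \<bullet> d = (g (x + s *\<^sub>R d) - g x) \<bullet> d" by (simp add: inner_diff_left)
      also have "\<dots> \<le> norm (g (x + s *\<^sub>R d) - g x) * norm d" by (rule norm_cauchy_schwarz)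
      also have "norm (g (x + s *\<^sub>R d) - g x) \<le> L * norm (s *\<^sub>R d)"
        using lipschitz_onD[OF lip, of "x + s *\<^sub>R d" x] by (simp add: dist_norm)
      hence "norm (g (x + s *\<^sub>R d) - g x) * norm d \<le> L * norm (s *\<^sub>R d) * norm d"
        by (rule mult_right_mono) simp
      also have "\<dots> = L / 2 * (2 * s) * (norm d)\<^sup>2" using s by (simp add: power2_eq_square)
      finally show ?thesis by simp
    qed
    ultimately show "\<exists>y. (\<psi> has_real_derivative y) (at s) \<and> y \<le> 0" by blast
  qed simp
  thus ?thesis by (simp add: \<psi>_def d_def)
qed

lemma coco:
  fixes h :: "'a::real_inner \<Rightarrow> real"
  assumes low: "\<And>x y. h x + gh x \<bullet> (y - x) \<le> h y"
    and up: "\<And>x y. h y \<le> h x + gh x \<bullet> (y - x) + L' / 2 * (norm (y - x))\<^sup>2"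
    and s: "0 < s" "s * L' \<le> 1"
  shows "s * (norm (gh x - gh y))\<^sup>2 \<le> (gh x - gh y) \<bullet> (x - y)"
proof -
  define d where "d = gh y - gh x"
  define z1 where "z1 = y - s *\<^sub>R d"
  define z2 where "z2 = x + s *\<^sub>R d"
  have 1: "h x + gh x \<bullet> (z1 - x) \<le> h z1" by (rule low)
  have 2: "h z1 \<le> h y + gh y \<bullet> (z1 - y) + L' / 2 * (norm (z1 - y))\<^sup>2" by (rule up)
  have 3: "h y + gh y \<bullet> (z2 - y) \<le> h z2" by (rule low)
  have 4: "h z2 \<le> h x + gh x \<bullet> (z2 - x) + L' / 2 * (norm (z2 - x))\<^sup>2" by (rule up)
  have e1: "gh x \<bullet> (z1 - x) = gh x \<bullet> (y - x) - s * (gh x \<bullet> d)"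
    by (simp add: z1_def inner_diff_right algebra_simps)
  have e2: "gh y \<bullet> (z1 - y) = - s * (gh y \<bullet> d)" by (simp add: z1_def)
  have e3: "gh y \<bullet> (z2 - y) = gh y \<bullet> (x - y) + s * (gh y \<bullet> d)"
    by (simp add: z2_def inner_diff_right inner_add_right algebra_simps)
  have e4: "gh x \<bullet> (z2 - x) = s * (gh x \<bullet> d)" by (simp add: z2_def)
  have n1: "(norm (z1 - y))\<^sup>2 = s\<^sup>2 * (norm d)\<^sup>2" by (simp add: z1_def power_mult_distrib)
  have n2: "(norm (z2 - x))\<^sup>2 = s\<^sup>2 * (norm d)\<^sup>2" by (simp add: z2_def power_mult_distrib)
  have dd: "gh y \<bullet> d - gh x \<bullet> d = (norm d)\<^sup>2"
    by (simp add: d_def power2_norm_eq_inner inner_diff_left)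
  have cr: "gh x \<bullet> (y - x) + gh y \<bullet> (x - y) = - ((gh x - gh y) \<bullet> (x - y))"
    by (simp add: inner_diff_left inner_diff_right algebra_simps)
  have nd: "norm d = norm (gh x - gh y)" by (simp add: d_def norm_minus_commute)
  have key: "2 * s * (norm d)\<^sup>2 - L' * s\<^sup>2 * (norm d)\<^sup>2 \<le> (gh x - gh y) \<bullet> (x - y)"
    using 1 2 3 4 e1 e2 e3 e4 n1 n2 dd cr by (simp add: algebra_simps)
  have "L' * s\<^sup>2 * (norm d)\<^sup>2 \<le> s * (norm d)\<^sup>2"
  proof -
    have "L' * s\<^sup>2 * (norm d)\<^sup>2 = (s * L') * (s * (norm d)\<^sup>2)" by (simp add: power2_eq_square)
    also have "\<dots> \<le> 1 * (s * (norm d)\<^sup>2)"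
      by (rule mult_right_mono) (use s in auto)
    finally show ?thesis by simp
  qed
  thus ?thesis using key nd by simp
qed

lemma gd_contract:
  fixes f :: "'a::euclidean_space \<Rightarrow> real"
  assumes der: "\<forall>z. (f has_derivative (\<lambda>h. g z \<bullet> h)) (at z)"
    and sc: "strongly_convex \<mu> f"
    and lip: "lipschitz_on L UNIV g"
    and mu: "0 < \<mu>" and L: "0 < L"
    and al: "0 < \<alpha>" "\<alpha> \<le> 2 / (\<mu> + L)"
  shows "(norm ((a - \<alpha> *\<^sub>R g a) - (b - \<alpha> *\<^sub>R g b)))\<^sup>2
         \<le> (1 - 2 * \<alpha> * \<mu> * L / (\<mu> + L)) * (norm (a - b))\<^sup>2"
proof -
  define h where "h z = f z - \<mu> / 2 * (norm z)\<^sup>2" for z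
  define gh where "gh z = g z - \<mu> *\<^sub>R z" for z
  have sq: "(norm y)\<^sup>2 - (norm x)\<^sup>2 = (norm (y - x))\<^sup>2 + 2 * (x \<bullet> (y - x))" for x y :: 'a
    by (simp add: power2_norm_eq_inner inner_diff_left inner_diff_right inner_commute algebra_simps)
  have low: "h x + gh x \<bullet> (y - x) \<le> h y" for x y
  proof -
    have "f x + g x \<bullet> (y - x) + \<mu> / 2 * (norm (y - x))\<^sup>2 \<le> f y"
      using sc_grad[OF sc] der by blast
    moreover have "\<mu> / 2 * ((norm y)\<^sup>2 - (norm x)\<^sup>2) = \<mu> / 2 * ((norm (y - x))\<^sup>2 + 2 * (x \<bullet> (y - x)))"
      using sq[of y x] by simp
    ultimately show ?thesis by (simp add: h_def gh_def inner_diff_left inner_diff_right algebra_simps)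
  qed
  have up: "h y \<le> h x + gh x \<bullet> (y - x) + (L - \<mu>) / 2 * (norm (y - x))\<^sup>2" for x y
  proof -
    have "f y \<le> f x + g x \<bullet> (y - x) + L / 2 * (norm (y - x))\<^sup>2"
      using descent[OF der lip] by blast
    moreover have "\<mu> / 2 * ((norm y)\<^sup>2 - (norm x)\<^sup>2) = \<mu> / 2 * ((norm (y - x))\<^sup>2 + 2 * (x \<bullet> (y - x)))"
      using sq[of y x] by simp
    ultimately show ?thesis by (simp add: h_def gh_def inner_diff_left inner_diff_right algebra_simps diff_divide_distrib)
  qed
  define r where "r = a - b"
  define d where "d = gh a - gh b"
  define p where "p = d \<bullet> r"
  define q where "q = (norm d)\<^sup>2"
  define R where "R = (norm r)\<^sup>2"
  have cc: "s * q \<le> p" if "0 < s" "s * (L - \<mu>) \<le> 1" for s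
    using coco[of h gh "L - \<mu>" s a b, OF low up that] by (simp add: q_def p_def d_def r_def)
  have pq: "0 \<le> p \<and> q \<le> (L - \<mu>) * p"
  proof (cases "L - \<mu> > 0")
    case True
    have "1 / (L - \<mu>) * q \<le> p" using cc[of "1 / (L - \<mu>)"] True by simp
    hence "q \<le> (L - \<mu>) * p" using True by (simp add: field_simps)
    moreover have "0 \<le> q" by (simp add: q_def)
    ultimately have "0 \<le> (L - \<mu>) * p" by linarith
    hence "0 \<le> p" using True by (simp add: zero_le_mult_iff)
    thus ?thesis using \<open>q \<le> (L - \<mu>) * p\<close> by simp
  next
    case False
    have q0: "q \<ge> 0" by (simp add: q_def)
    have "q = 0"
    proof (rule ccontr)
      assume "q \<noteq> 0" hence qp: "q > 0" using q0 by simp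
      have "1 * q \<le> p" using cc[of 1] False by simp
      moreover have "(2 * p / q) * q \<le> p"
      proof (rule cc)
        show "0 < 2 * p / q" using qp \<open>1 * q \<le> p\<close> by simp
        have "2 * p / q * (L - \<mu>) \<le> 0"
          using qp \<open>1 * q \<le> p\<close> False by (intro mult_nonneg_nonpos) auto
        thus "2 * p / q * (L - \<mu>) \<le> 1" by simp
      qed
      ultimately show False using qp by simp
    qed
    hence "d = 0" by (simp add: q_def)
    thus ?thesis by (simp add: p_def q_def)
  qed
  have G: "g a - g b = d + \<mu> *\<^sub>R r" by (simp add: d_def gh_def r_def algebra_simps)
  have "(a - \<alpha> *\<^sub>R g a) - (b - \<alpha> *\<^sub>R g b) = r - \<alpha> *\<^sub>R (g a - g b)"
    by (simp add: r_def algebra_simps)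
  also have "\<dots> = r - \<alpha> *\<^sub>R (d + \<mu> *\<^sub>R r)" using G by simp
  also have "\<dots> = (1 - \<alpha> * \<mu>) *\<^sub>R r - \<alpha> *\<^sub>R d" by (simp add: algebra_simps)
  finally have "(a - \<alpha> *\<^sub>R g a) - (b - \<alpha> *\<^sub>R g b) = (1 - \<alpha> * \<mu>) *\<^sub>R r - \<alpha> *\<^sub>R d" .
  have E0: "(norm ((1 - \<alpha> * \<mu>) *\<^sub>R r - \<alpha> *\<^sub>R d))\<^sup>2
         = (1 - \<alpha> * \<mu>)\<^sup>2 * R - 2 * \<alpha> * (1 - \<alpha> * \<mu>) * p + \<alpha>\<^sup>2 * q"
    unfolding power2_norm_eq_inner R_def q_def p_def
    by (simp add: inner_diff_left inner_diff_right inner_commute algebra_simps power2_eq_square)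
  have E: "(norm ((a - \<alpha> *\<^sub>R g a) - (b - \<alpha> *\<^sub>R g b)))\<^sup>2
         = (1 - \<alpha> * \<mu>)\<^sup>2 * R - 2 * \<alpha> * (1 - \<alpha> * \<mu>) * p + \<alpha>\<^sup>2 * q"
    unfolding \<open>(a - \<alpha> *\<^sub>R g a) - (b - \<alpha> *\<^sub>R g b) = (1 - \<alpha> * \<mu>) *\<^sub>R r - \<alpha> *\<^sub>R d\<close> by (rule E0)
  have "\<alpha>\<^sup>2 * q \<le> \<alpha>\<^sup>2 * ((L - \<mu>) * p)" using pq by (intro mult_left_mono) auto
  moreover have "\<alpha> * p * (\<alpha> * (L + \<mu>) - 2) \<le> 0"
  proof -
    have "\<alpha> * (L + \<mu>) \<le> 2" using al mu L by (simp add: field_simps)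
    thus ?thesis using pq al by (intro mult_nonneg_nonpos) auto
  qed
  moreover have "(1 - \<alpha> * \<mu>)\<^sup>2 * R \<le> (1 - 2 * \<alpha> * \<mu> * L / (\<mu> + L)) * R"
  proof (rule mult_right_mono)
    have "(1 - 2 * \<alpha> * \<mu> * L / (\<mu> + L)) - (1 - \<alpha> * \<mu>)\<^sup>2 = \<alpha> * \<mu>\<^sup>2 * (2 - \<alpha> * (\<mu> + L)) / (\<mu> + L)"
      using mu L by (simp add: field_simps power2_eq_square)
    moreover have "0 \<le> \<alpha> * \<mu>\<^sup>2 * (2 - \<alpha> * (\<mu> + L)) / (\<mu> + L)"
    proof -
      have "\<alpha> * (\<mu> + L) \<le> 2" using al mu L by (simp add: field_simps)
      thus ?thesis using al mu L by simp
    qed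
    ultimately show "(1 - \<alpha> * \<mu>)\<^sup>2 \<le> 1 - 2 * \<alpha> * \<mu> * L / (\<mu> + L)" by linarith
  qed (simp add: R_def)
  ultimately have "(1 - \<alpha> * \<mu>)\<^sup>2 * R - 2 * \<alpha> * (1 - \<alpha> * \<mu>) * p + \<alpha>\<^sup>2 * q
      \<le> (1 - 2 * \<alpha> * \<mu> * L / (\<mu> + L)) * R"
  proof -
    assume a1: "\<alpha>\<^sup>2 * q \<le> \<alpha>\<^sup>2 * ((L - \<mu>) * p)" and a2: "\<alpha> * p * (\<alpha> * (L + \<mu>) - 2) \<le> 0"
      and a3: "(1 - \<alpha> * \<mu>)\<^sup>2 * R \<le> (1 - 2 * \<alpha> * \<mu> * L / (\<mu> + L)) * R"
    have "(1 - \<alpha> * \<mu>)\<^sup>2 * R - 2 * \<alpha> * (1 - \<alpha> * \<mu>) * p + \<alpha>\<^sup>2 * ((L - \<mu>) * p)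
        = (1 - \<alpha> * \<mu>)\<^sup>2 * R + \<alpha> * p * (\<alpha> * (L + \<mu>) - 2)"
      by (simp add: algebra_simps power2_eq_square)
    thus ?thesis using a1 a2 a3 by linarith
  qed
  moreover have "(norm (a - b))\<^sup>2 = R" by (simp add: R_def r_def)
  ultimately show ?thesis unfolding E by simp
qed

lemma grad_zero:
  fixes f :: "'a::euclidean_space \<Rightarrow> real"
  assumes der: "\<forall>z. (f has_derivative (\<lambda>h. g z \<bullet> h)) (at z)"
    and lip: "lipschitz_on L UNIV g" and L: "0 < L"
    and mn: "\<forall>z. f x \<le> f z"
  shows "g x = 0"
proof -
  have "f (x - (1 / L) *\<^sub>R g x) \<le> f x + g x \<bullet> ((x - (1 / L) *\<^sub>R g x) - x) + L / 2 * (norm ((x - (1 / L) *\<^sub>R g x) - x))\<^sup>2"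
    by (rule descent[OF der lip])
  also have "\<dots> = f x - (norm (g x))\<^sup>2 / (2 * L)"
    using L by (simp add: power_mult_distrib field_simps power2_eq_square dot_square_norm)
  finally have "(norm (g x))\<^sup>2 / (2 * L) \<le> 0" using mn by (smt (verit))
  hence "(norm (g x))\<^sup>2 \<le> 0" using L by (simp add: divide_le_0_iff)
  thus ?thesis by simp
qed

lemma mu_le_L:
  fixes f :: "'a::euclidean_space \<Rightarrow> real"
  assumes der: "\<forall>z. (f has_derivative (\<lambda>h. g z \<bullet> h)) (at z)"
    and sc: "strongly_convex \<mu> f"
    and lip: "lipschitz_on L UNIV g"
  shows "\<mu> \<le> L"
proof -
  obtain b :: 'a where b: "b \<in> Basis" using nonempty_Basis by blast
  hence bn: "norm b = 1" by simp
  have 1: "f 0 + g 0 \<bullet> (b - 0) + \<mu> / 2 * (norm (b - 0))\<^sup>2 \<le> f b" using sc_grad[OF sc] der by blast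
  have 2: "f b + g b \<bullet> (0 - b) + \<mu> / 2 * (norm (0 - b))\<^sup>2 \<le> f 0" using sc_grad[OF sc] der by blast
  have "\<mu> \<le> (g b - g 0) \<bullet> b" using 1 2 bn by (simp add: inner_diff_left)
  also have "\<dots> \<le> norm (g b - g 0) * norm b" by (rule norm_cauchy_schwarz)
  also have "\<dots> \<le> L" using lipschitz_onD[OF lip, of b 0] bn by (simp add: dist_norm)
  finally show ?thesis .
qed

lemma sym_dot:
  fixes M :: "real^'n^'n"
  assumes "transpose M = M"
  shows "(M *v a) \<bullet> b = a \<bullet> (M *v b)"
proof -
  have "M *v a = a v* M" using vector_transpose_matrix[of a M] assms by simp
  thus ?thesis by (simp add: dot_lmul_matrix)
qed

lemma eig_orth:
  fixes W :: "real^'n^'n"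
  assumes "transpose W = W" "W *v a = l1 *\<^sub>R a" "W *v b = l2 *\<^sub>R b" "l1 \<noteq> l2"
  shows "a \<bullet> b = 0"
proof -
  have "l1 * (a \<bullet> b) = (W *v a) \<bullet> b" using assms by simp
  also have "\<dots> = a \<bullet> (W *v b)" by (rule sym_dot[OF assms(1)])
  also have "\<dots> = l2 * (a \<bullet> b)" using assms by simp
  finally show ?thesis using assms(4) by simp
qed

lemma eig_finite:
  fixes W :: "real^'n^'n"
  assumes sym: "transpose W = W"
  shows "finite {l. is_eigenvalue W l}"
proof (rule ccontr)
  assume inf: "infinite {l. is_eigenvalue W l}"
  then obtain T where T: "finite T" "card T = CARD('n) + 1" "T \<subseteq> {l. is_eigenvalue W l}"
    using infinite_arbitrarily_large by blast
  define ev where "ev l = (SOME v. v \<noteq> 0 \<and> W *v v = l *\<^sub>R v)" for l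
  have ev: "ev l \<noteq> 0 \<and> W *v ev l = l *\<^sub>R ev l" if "l \<in> T" for l
  proof -
    have "\<exists>v. v \<noteq> 0 \<and> W *v v = l *\<^sub>R v" using T(3) that by (auto simp: is_eigenvalue_def)
    thus ?thesis unfolding ev_def by (rule someI_ex)
  qed
  have orth: "ev l1 \<bullet> ev l2 = 0" if "l1 \<in> T" "l2 \<in> T" "l1 \<noteq> l2" for l1 l2
    using eig_orth[OF sym] ev that by blast
  have inj: "inj_on ev T"
  proof (rule inj_onI)
    fix l1 l2 assume l: "l1 \<in> T" "l2 \<in> T" "ev l1 = ev l2"
    show "l1 = l2"
    proof (rule ccontr)
      assume "l1 \<noteq> l2"
      hence "ev l1 \<bullet> ev l1 = 0" using orth l by metis
      thus False using ev l(1) by simp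
    qed
  qed
  have ind: "independent (ev ` T)"
  proof (rule pairwise_orthogonal_independent)
    show "pairwise orthogonal (ev ` T)"
      unfolding pairwise_def orthogonal_def using orth by auto
    show "0 \<notin> ev ` T" using ev by auto
  qed
  have "card (ev ` T) \<le> DIM(real^'n)" using independent_bound ind by blast
  moreover have "card (ev ` T) = CARD('n) + 1" using card_image[OF inj] T by simp
  ultimately show False by simp
qed

lemma quad0:
  fixes a b :: real
  assumes "\<And>t. a * t + b * t\<^sup>2 \<le> 0"
  shows "a = 0"
proof (rule ccontr)
  assume a: "a \<noteq> 0"
  define c where "c = \<bar>b\<bar> + 1"
  have c: "c > 0" "2 * c + b > 0" by (auto simp: c_def)
  define t where "t = a / (2 * c)"
  have "a * t + b * t\<^sup>2 = a\<^sup>2 * (2 * c + b) / (4 * c\<^sup>2)"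
    using c by (simp add: t_def field_simps power2_eq_square)
  moreover have "a\<^sup>2 * (2 * c + b) / (4 * c\<^sup>2) > 0" using a c by simp
  ultimately show False using assms[of t] by simp
qed

lemma spectral_norm:
  fixes M :: "real^'n^'n"
  assumes sym: "transpose M = M"
  shows "\<exists>\<sigma>\<ge>0. (\<forall>v. norm (M *v v) \<le> \<sigma> * norm v) \<and>
           (\<sigma> = 0 \<or> (\<exists>z l. z \<noteq> 0 \<and> M *v z = l *\<^sub>R z \<and> \<bar>l\<bar> = \<sigma>))"
proof -
  have "\<exists>x\<in>sphere 0 1. \<forall>y\<in>sphere 0 1. norm (M *v y) \<le> norm (M *v x)"
    by (rule continuous_attains_sup) (auto intro!: continuous_intros)
  then obtain v0 where v0: "norm v0 = 1" and mx: "\<And>y. norm y = 1 \<Longrightarrow> norm (M *v y) \<le> norm (M *v v0)"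
    by auto
  define \<sigma> where "\<sigma> = norm (M *v v0)"
  have bnd: "norm (M *v v) \<le> \<sigma> * norm v" for v
  proof (cases "v = 0")
    case True thus ?thesis by simp
  next
    case False
    have "norm (M *v ((1 / norm v) *\<^sub>R v)) \<le> \<sigma>" using mx[of "(1 / norm v) *\<^sub>R v"] False
      by (simp add: \<sigma>_def)
    hence "(1 / norm v) * norm (M *v v) \<le> \<sigma>" by (simp add: matrix_vector_mult_scaleR)
    thus ?thesis using False by (simp add: field_simps)
  qed
  have sq: "(M *v v) \<bullet> (M *v v) \<le> \<sigma>\<^sup>2 * (v \<bullet> v)" for v
  proof -
    have "norm (M *v v) ^ 2 \<le> (\<sigma> * norm v) ^ 2"
      using bnd[of v] by (intro power_mono) auto
    thus ?thesis by (simp add: power2_norm_eq_inner[symmetric] power_mult_distrib)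
  qed
  have s0: "(M *v v0) \<bullet> (M *v v0) = \<sigma>\<^sup>2" "v0 \<bullet> v0 = 1"
    using v0 by (simp_all add: \<sigma>_def power2_norm_eq_inner[symmetric])
  have MM: "M *v (M *v v0) = \<sigma>\<^sup>2 *\<^sub>R v0"
  proof -
    have "(M *v v0) \<bullet> (M *v w) = \<sigma>\<^sup>2 * (v0 \<bullet> w)" for w
    proof -
      have "\<forall>t. (2 * ((M *v v0) \<bullet> (M *v w) - \<sigma>\<^sup>2 * (v0 \<bullet> w))) * t
               + ((M *v w) \<bullet> (M *v w) - \<sigma>\<^sup>2 * (w \<bullet> w)) * t\<^sup>2 \<le> 0"
      proof
        fix t :: real
        have "(M *v (v0 + t *\<^sub>R w)) \<bullet> (M *v (v0 + t *\<^sub>R w)) \<le> \<sigma>\<^sup>2 * ((v0 + t *\<^sub>R w) \<bullet> (v0 + t *\<^sub>R w))"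
          by (rule sq)
        thus "(2 * ((M *v v0) \<bullet> (M *v w) - \<sigma>\<^sup>2 * (v0 \<bullet> w))) * t
               + ((M *v w) \<bullet> (M *v w) - \<sigma>\<^sup>2 * (w \<bullet> w)) * t\<^sup>2 \<le> 0"
          using s0 by (simp add: matrix_vector_right_distrib matrix_vector_mult_scaleR
              inner_add_left inner_add_right inner_commute algebra_simps power2_eq_square)
      qed
      hence "2 * ((M *v v0) \<bullet> (M *v w) - \<sigma>\<^sup>2 * (v0 \<bullet> w)) = 0" by (intro quad0) auto
      thus ?thesis by simp
    qed
    hence "(M *v (M *v v0)) \<bullet> w = (\<sigma>\<^sup>2 *\<^sub>R v0) \<bullet> w" for w
      using sym_dot[OF sym, of "M *v v0" w] by simp
    hence "(M *v (M *v v0) - \<sigma>\<^sup>2 *\<^sub>R v0) \<bullet> w = 0" for w by (simp add: inner_diff_left)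
    from this[of "M *v (M *v v0) - \<sigma>\<^sup>2 *\<^sub>R v0"] show ?thesis by simp
  qed
  have "\<sigma> = 0 \<or> (\<exists>z l. z \<noteq> 0 \<and> M *v z = l *\<^sub>R z \<and> \<bar>l\<bar> = \<sigma>)"
  proof (cases "\<sigma> = 0")
    case True thus ?thesis by simp
  next
    case False
    hence sp: "\<sigma> > 0" by (simp add: \<sigma>_def)
    define w where "w = M *v v0 + \<sigma> *\<^sub>R v0"
    have Mw: "M *v w = \<sigma> *\<^sub>R w"
      by (simp add: w_def matrix_vector_right_distrib matrix_vector_mult_scaleR MM power2_eq_square algebra_simps)
    show ?thesis
    proof (cases "w = 0")
      case False thus ?thesis using Mw sp by (intro disjI2 exI[of _ w] exI[of _ \<sigma>]) auto
    next
      case True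
      hence "M *v v0 = (- \<sigma>) *\<^sub>R v0" by (simp add: w_def eq_neg_iff_add_eq_0)
      moreover have "v0 \<noteq> 0" using v0 by auto
      ultimately show ?thesis using sp by (intro disjI2 exI[of _ v0] exI[of _ "-\<sigma>"]) auto
    qed
  qed
  moreover have "\<sigma> \<ge> 0" by (simp add: \<sigma>_def)
  ultimately show ?thesis using bnd by blast
qed

lemma matpow_stoch:
  fixes W :: "real^'n^'n"
  assumes nn: "\<forall>i j. 0 \<le> W $ i $ j" and rows: "\<forall>i. (\<Sum>j\<in>UNIV. W $ i $ j) = 1"
    and cols: "\<forall>j. (\<Sum>i\<in>UNIV. W $ i $ j) = 1"
  shows "(\<forall>i j. 0 \<le> matpow W t $ i $ j) \<and> (\<forall>i. (\<Sum>j\<in>UNIV. matpow W t $ i $ j) = 1)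
         \<and> (\<forall>j. (\<Sum>i\<in>UNIV. matpow W t $ i $ j) = 1)"
proof (induction t)
  case 0
  have "(\<Sum>j\<in>UNIV. (mat 1 :: real^'n^'n) $ i $ j) = 1" for i
    by (simp add: mat_def if_distrib)
  moreover have "(\<Sum>i\<in>UNIV. (mat 1 :: real^'n^'n) $ i $ j) = 1" for j
    by (simp add: mat_def if_distrib)
  ultimately show ?case by (simp add: mat_def)
next
  case (Suc t)
  let ?A = "matpow W t"
  have e: "matpow W (Suc t) $ i $ j = (\<Sum>k\<in>UNIV. W $ i $ k * ?A $ k $ j)" for i j
    by (simp add: matrix_matrix_mult_def)
  have 1: "0 \<le> matpow W (Suc t) $ i $ j" for i j
    unfolding e using Suc nn by (intro sum_nonneg) auto
  have 2: "(\<Sum>j\<in>UNIV. matpow W (Suc t) $ i $ j) = 1" for i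
  proof -
    have "(\<Sum>j\<in>UNIV. matpow W (Suc t) $ i $ j) = (\<Sum>k\<in>UNIV. W $ i $ k * (\<Sum>j\<in>UNIV. ?A $ k $ j))"
      unfolding e sum_distrib_left by (rule sum.swap)
    also have "\<dots> = 1" using Suc rows by simp
    finally show ?thesis .
  qed
  have 3: "(\<Sum>i\<in>UNIV. matpow W (Suc t) $ i $ j) = 1" for j
  proof -
    have "(\<Sum>i\<in>UNIV. matpow W (Suc t) $ i $ j) = (\<Sum>k\<in>UNIV. (\<Sum>i\<in>UNIV. W $ i $ k) * ?A $ k $ j)"
      unfolding e sum_distrib_right by (rule sum.swap)
    also have "\<dots> = 1" using Suc cols by simp
    finally show ?thesis .
  qed
  show ?case using 1 2 3 by blast
qed

definition Jm :: "real^'n^'n" where "Jm = (\<chi> i j. 1 / real CARD('n))"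

lemma W_bound:
  fixes W :: "real^'n^'n"
  assumes sym: "transpose W = W" and rows: "\<forall>i. (\<Sum>j\<in>UNIV. W $ i $ j) = 1"
    and eig1: "dim {v. W *v v = v} = 1" and bpos: "0 < second_eig_mag W"
  shows "norm ((W - Jm) *v v) \<le> second_eig_mag W * norm v"
proof -
  define M where "M = W - Jm"
  define n where "n = real CARD('n)"
  have npos: "n > 0" by (simp add: n_def)
  have symM: "transpose M = M"
    using sym unfolding M_def Jm_def by (simp add: vec_eq_iff transpose_def)
  obtain \<sigma> where s: "\<sigma> \<ge> 0" "\<forall>v. norm (M *v v) \<le> \<sigma> * norm v"
    "\<sigma> = 0 \<or> (\<exists>z l. z \<noteq> 0 \<and> M *v z = l *\<^sub>R z \<and> \<bar>l\<bar> = \<sigma>)"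
    using spectral_norm[OF symM] by blast
  have "\<sigma> \<le> second_eig_mag W"
  proof (cases "\<sigma> = 0")
    case True thus ?thesis using bpos by simp
  next
    case False
    then obtain z l where zl: "z \<noteq> 0" "M *v z = l *\<^sub>R z" "\<bar>l\<bar> = \<sigma>" using s by blast
    have l0: "l \<noteq> 0" using zl False by auto
    define one :: "real^'n" where "one = (\<chi> i. 1)"
    have Wone: "W *v one = one" using rows by (simp add: one_def matrix_vector_mult_def vec_eq_iff)
    have Jone: "Jm *v one = one" using npos by (simp add: one_def Jm_def matrix_vector_mult_def vec_eq_iff n_def)
    have Mone: "M *v one = 0" by (simp add: M_def matrix_vector_mult_diff_rdistrib Wone Jone)
    have "l * (one \<bullet> z) = one \<bullet> (M *v z)" using zl by simp
    also have "\<dots> = (M *v one) \<bullet> z" using sym_dot[OF symM] by simp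
    also have "\<dots> = 0" using Mone by simp
    finally have oz: "one \<bullet> z = 0" using l0 by simp
    have Jz: "Jm *v z = 0"
    proof -
      have "(Jm *v z) $ i = (1 / n) * (one \<bullet> z)" for i
        by (simp add: Jm_def matrix_vector_mult_def inner_vec_def one_def n_def sum_distrib_left)
      thus ?thesis using oz by (simp add: vec_eq_iff)
    qed
    have Wz: "W *v z = l *\<^sub>R z"
    proof -
      have "W *v z = M *v z + Jm *v z" by (simp add: M_def matrix_vector_mult_diff_rdistrib)
      thus ?thesis using zl Jz by simp
    qed
    have l1: "l \<noteq> 1"
    proof
      assume "l = 1"
      hence sub: "{one, z} \<subseteq> {v. W *v v = v}" using Wone Wz by auto
      have onez: "one \<noteq> 0" by (simp add: one_def vec_eq_iff)
      have ne: "one \<noteq> z"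
      proof
        assume "one = z" hence "one \<bullet> one = 0" using oz by simp
        thus False using onez by simp
      qed
      have "independent {one, z}"
      proof (rule pairwise_orthogonal_independent)
        show "pairwise orthogonal {one, z}"
          using oz by (auto simp: pairwise_def orthogonal_def inner_commute)
        show "0 \<notin> {one, z}" using onez zl by auto
      qed
      hence "card {one, z} \<le> dim {v. W *v v = v}" using independent_card_le_dim[OF sub] by blast
      thus False using ne eig1 by simp
    qed
    have ev: "is_eigenvalue W l" using Wz zl unfolding is_eigenvalue_def by blast
    have fin: "finite {\<bar>l\<bar> | l. is_eigenvalue W l \<and> l \<noteq> 1}"
    proof -
      have "{\<bar>l\<bar> | l. is_eigenvalue W l \<and> l \<noteq> 1} \<subseteq> abs ` {l. is_eigenvalue W l}" by auto
      thus ?thesis using eig_finite[OF sym] finite_subset by blast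
    qed
    have "\<bar>l\<bar> \<le> second_eig_mag W"
      unfolding second_eig_mag_def using ev l1 by (intro Max_ge[OF fin]) auto
    thus ?thesis using zl by simp
  qed
  hence "\<sigma> * norm v \<le> second_eig_mag W * norm v" by (intro mult_right_mono) auto
  thus ?thesis using s(2) unfolding M_def by (meson order_trans)
qed

lemma Pt_bound:
  fixes W :: "real^'n^'n"
  assumes sym: "transpose W = W" and nn: "\<forall>i j. 0 \<le> W $ i $ j"
    and rows: "\<forall>i. (\<Sum>j\<in>UNIV. W $ i $ j) = 1"
    and cols: "\<forall>j. (\<Sum>i\<in>UNIV. W $ i $ j) = 1"
    and eig1: "dim {v. W *v v = v} = 1" and bpos: "0 < second_eig_mag W"
  shows "norm ((matpow W t - Jm) *v v) \<le> second_eig_mag W ^ t * norm v"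
proof (induction t arbitrary: v)
  case 0
  define n where "n = real CARD('n)"
  have npos: "n > 0" by (simp add: n_def)
  define one :: "real^'n" where "one = (\<chi> i. 1)"
  define c where "c = (\<Sum>i\<in>UNIV. v $ i) / n"
  have Jv: "Jm *v v = c *\<^sub>R one"
    by (simp add: Jm_def one_def c_def n_def matrix_vector_mult_def vec_eq_iff sum_divide_distrib)
  have ov: "one \<bullet> v = n * c" using npos by (simp add: one_def inner_vec_def c_def)
  have oo: "one \<bullet> one = n" by (simp add: one_def inner_vec_def n_def)
  have "(norm (v - c *\<^sub>R one))\<^sup>2 = v \<bullet> v - 2 * c * (one \<bullet> v) + c\<^sup>2 * (one \<bullet> one)"
    unfolding power2_norm_eq_inner by (simp add: inner_diff_left inner_diff_right inner_commute power2_eq_square algebra_simps)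
  also have "\<dots> = (norm v)\<^sup>2 - n * c\<^sup>2" using ov oo by (simp add: dot_square_norm power2_eq_square)
  also have "\<dots> \<le> (norm v)\<^sup>2" using npos by simp
  finally have "norm (v - c *\<^sub>R one) \<le> norm v" using power2_le_imp_le by fastforce
  thus ?case by (simp add: matrix_vector_mult_diff_rdistrib Jv)
next
  case (Suc t)
  let ?A = "matpow W t"
  define n where "n = real CARD('n)"
  have npos: "n > 0" by (simp add: n_def)
  have Acols: "\<forall>j. (\<Sum>i\<in>UNIV. ?A $ i $ j) = 1" using matpow_stoch[OF nn rows cols] by blast
  have id: "(W - Jm) ** (?A - Jm) = matpow W (Suc t) - Jm"
  proof -
    have "((W - Jm) ** (?A - Jm)) $ i $ j = (W ** ?A) $ i $ j - 1 / n" for i j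
    proof -
      have "((W - Jm) ** (?A - Jm)) $ i $ j = (\<Sum>k\<in>UNIV. (W $ i $ k - 1 / n) * (?A $ k $ j - 1 / n))"
        by (simp add: matrix_matrix_mult_def Jm_def n_def)
      also have "\<dots> = (\<Sum>k\<in>UNIV. W $ i $ k * ?A $ k $ j) - (1 / n) * (\<Sum>k\<in>UNIV. W $ i $ k)
                      - (1 / n) * (\<Sum>k\<in>UNIV. ?A $ k $ j) + (\<Sum>k\<in>(UNIV::'n set). 1 / n * (1 / n))"
        by (simp add: algebra_simps sum.distrib sum_subtractf sum_distrib_left)
      also have "\<dots> = (W ** ?A) $ i $ j - 1 / n"
        using rows Acols npos by (simp add: matrix_matrix_mult_def n_def[symmetric] field_simps)
      finally show ?thesis .
    qed
    thus ?thesis by (simp add: vec_eq_iff Jm_def n_def)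
  qed
  have "(matpow W (Suc t) - Jm) *v v = (W - Jm) *v ((?A - Jm) *v v)"
    by (simp add: matrix_vector_mul_assoc id)
  also have "norm \<dots> \<le> second_eig_mag W * norm ((?A - Jm) *v v)"
    by (rule W_bound[OF sym rows eig1 bpos])
  also have "\<dots> \<le> second_eig_mag W * (second_eig_mag W ^ t * norm v)"
    using Suc bpos by (intro mult_left_mono) auto
  finally show ?case by simp
qed

lemma norm_sq_basis: "(norm (w::'a::euclidean_space))\<^sup>2 = (\<Sum>b\<in>Basis. (w \<bullet> b)\<^sup>2)"
  unfolding power2_norm_eq_inner by (subst euclidean_inner) (simp add: power2_eq_square)

lemma norm_sq_vec: "(norm (w::real^'n))\<^sup>2 = (\<Sum>i\<in>UNIV. (w $ i)\<^sup>2)"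
  unfolding power2_norm_eq_inner by (simp add: inner_vec_def power2_eq_square)

lemma stack_bound:
  fixes P :: "real^'n^'n" and v :: "'n \<Rightarrow> 'a::euclidean_space"
  assumes Pb: "\<forall>w. norm (P *v w) \<le> c * norm w" and c: "0 \<le> c"
  shows "(\<Sum>i\<in>UNIV. (norm (\<Sum>j\<in>UNIV. P $ i $ j *\<^sub>R v j))\<^sup>2) \<le> c\<^sup>2 * (\<Sum>j\<in>UNIV. (norm (v j))\<^sup>2)"
proof -
  define vb where "vb b = (\<chi> j. v j \<bullet> b)" for b
  have 2: "(\<Sum>j\<in>UNIV. P $ i $ j *\<^sub>R v j) \<bullet> b = (P *v vb b) $ i" for i b
    by (simp add: inner_sum_left matrix_vector_mult_def vb_def)
  have "(\<Sum>i\<in>UNIV. (norm (\<Sum>j\<in>UNIV. P $ i $ j *\<^sub>R v j))\<^sup>2) = (\<Sum>i\<in>UNIV. \<Sum>b\<in>Basis. ((P *v vb b) $ i)\<^sup>2)"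
    by (simp add: norm_sq_basis 2)
  also have "\<dots> = (\<Sum>b\<in>Basis. \<Sum>i\<in>UNIV. ((P *v vb b) $ i)\<^sup>2)" by (rule sum.swap)
  also have "\<dots> = (\<Sum>b\<in>Basis. (norm (P *v vb b))\<^sup>2)" by (simp add: norm_sq_vec)
  also have "\<dots> \<le> (\<Sum>b\<in>(Basis::'a set). c\<^sup>2 * (norm (vb b))\<^sup>2)"
  proof (rule sum_mono)
    fix b :: 'a
    have "(norm (P *v vb b))\<^sup>2 \<le> (c * norm (vb b))\<^sup>2"
      using Pb by (intro power_mono) auto
    thus "(norm (P *v vb b))\<^sup>2 \<le> c\<^sup>2 * (norm (vb b))\<^sup>2" by (simp add: power_mult_distrib)
  qed
  also have "\<dots> = c\<^sup>2 * (\<Sum>b\<in>(Basis::'a set). \<Sum>j\<in>UNIV. (v j \<bullet> b)\<^sup>2)"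
    by (simp add: sum_distrib_left norm_sq_vec vb_def)
  also have "(\<Sum>b\<in>(Basis::'a set). \<Sum>j\<in>UNIV. (v j \<bullet> b)\<^sup>2) = (\<Sum>j\<in>UNIV. \<Sum>b\<in>(Basis::'a set). (v j \<bullet> b)\<^sup>2)"
    by (rule sum.swap)
  also have "\<dots> = (\<Sum>j\<in>UNIV. (norm (v j))\<^sup>2)" by (simp add: norm_sq_basis)
  finally show ?thesis .
qed

lemma jensen_sq:
  fixes a w :: "'n::finite \<Rightarrow> real"
  assumes "\<forall>j. 0 \<le> a j" "(\<Sum>j\<in>UNIV. a j) = 1"
  shows "(\<Sum>j\<in>UNIV. a j * w j)\<^sup>2 \<le> (\<Sum>j\<in>UNIV. a j * (w j)\<^sup>2)"
proof -
  define m where "m = (\<Sum>j\<in>UNIV. a j * w j)"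
  have "0 \<le> (\<Sum>j\<in>UNIV. a j * (w j - m)\<^sup>2)" using assms by (intro sum_nonneg) auto
  also have "\<dots> = (\<Sum>j\<in>UNIV. a j * (w j)\<^sup>2) - 2 * m * (\<Sum>j\<in>UNIV. a j * w j) + m\<^sup>2 * (\<Sum>j\<in>UNIV. a j)"
    by (simp add: power2_diff algebra_simps sum.distrib sum_subtractf sum_distrib_left sum_distrib_right)
  also have "\<dots> = (\<Sum>j\<in>UNIV. a j * (w j)\<^sup>2) - m\<^sup>2"
    using assms by (simp add: m_def power2_eq_square)
  finally show ?thesis by (simp add: m_def)
qed

lemma ds_bound:
  fixes A :: "real^'n^'n" and v :: "'n \<Rightarrow> 'a::real_normed_vector"
  assumes nn: "\<forall>i j. 0 \<le> A $ i $ j" and rows: "\<forall>i. (\<Sum>j\<in>UNIV. A $ i $ j) = 1"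
    and cols: "\<forall>j. (\<Sum>i\<in>UNIV. A $ i $ j) = 1"
  shows "(\<Sum>i\<in>UNIV. (norm (\<Sum>j\<in>UNIV. A $ i $ j *\<^sub>R v j))\<^sup>2) \<le> (\<Sum>j\<in>UNIV. (norm (v j))\<^sup>2)"
proof -
  have "(norm (\<Sum>j\<in>UNIV. A $ i $ j *\<^sub>R v j))\<^sup>2 \<le> (\<Sum>j\<in>UNIV. A $ i $ j * (norm (v j))\<^sup>2)" for i
  proof -
    have "norm (\<Sum>j\<in>UNIV. A $ i $ j *\<^sub>R v j) \<le> (\<Sum>j\<in>UNIV. norm (A $ i $ j *\<^sub>R v j))"
      by (rule norm_sum)
    also have "\<dots> = (\<Sum>j\<in>UNIV. A $ i $ j * norm (v j))" using nn by simp
    finally have "(norm (\<Sum>j\<in>UNIV. A $ i $ j *\<^sub>R v j))\<^sup>2 \<le> (\<Sum>j\<in>UNIV. A $ i $ j * norm (v j))\<^sup>2"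
      by (intro power_mono) auto
    also have "\<dots> \<le> (\<Sum>j\<in>UNIV. A $ i $ j * (norm (v j))\<^sup>2)"
      using jensen_sq[of "\<lambda>j. A $ i $ j" "\<lambda>j. norm (v j)"] nn rows by simp
    finally show ?thesis .
  qed
  hence "(\<Sum>i\<in>UNIV. (norm (\<Sum>j\<in>UNIV. A $ i $ j *\<^sub>R v j))\<^sup>2) \<le> (\<Sum>i\<in>UNIV. \<Sum>j\<in>UNIV. A $ i $ j * (norm (v j))\<^sup>2)"
    by (intro sum_mono) auto
  also have "\<dots> = (\<Sum>j\<in>UNIV. \<Sum>i\<in>UNIV. A $ i $ j * (norm (v j))\<^sup>2)" by (rule sum.swap)
  also have "\<dots> = (\<Sum>j\<in>UNIV. (norm (v j))\<^sup>2)" using cols by (simp add: sum_distrib_right[symmetric])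
  finally show ?thesis .
qed

lemma young_sq:
  fixes p q e :: real
  assumes "0 < e"
  shows "(p + q)\<^sup>2 \<le> (1 + e) * p\<^sup>2 + (1 + 1 / e) * q\<^sup>2"
proof -
  have "0 \<le> (e * p - q)\<^sup>2" by simp
  hence h: "2 * e * (p * q) \<le> e * (e * p\<^sup>2) + q\<^sup>2" by (simp add: power2_diff power_mult_distrib algebra_simps power2_eq_square)
  have "e * (2 * (p * q)) \<le> e * (e * p\<^sup>2 + q\<^sup>2 / e)" using h assms by (simp add: algebra_simps)
  hence h2: "2 * (p * q) \<le> e * p\<^sup>2 + q\<^sup>2 / e" using assms by (simp add: mult_le_cancel_left_pos)
  have "(1 + e) * p\<^sup>2 + (1 + 1 / e) * q\<^sup>2 = p\<^sup>2 + q\<^sup>2 + (e * p\<^sup>2 + q\<^sup>2 / e)" by (simp add: algebra_simps)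
  thus ?thesis using h2 by (simp add: power2_sum)
qed

theorem corollary2:
  fixes W :: "real^'n::finite^'n"
    and E :: "'n \<Rightarrow> 'n \<Rightarrow> bool"
    and f :: "'n \<Rightarrow> 'a::euclidean_space \<Rightarrow> real"
    and g :: "'n \<Rightarrow> 'a \<Rightarrow> 'a"
    and \<mu> Lc :: "'n \<Rightarrow> real"
    and t :: nat and \<alpha> :: real
    and s0 xstar :: 'a and u :: "'n \<Rightarrow> 'a"
    and x y :: "nat \<Rightarrow> 'n \<Rightarrow> 'a"
  assumes W_sym: "transpose W = W"
    and W_nonneg: "\<forall>i j. 0 \<le> W $ i $ j"
    and W_rows: "\<forall>i. (\<Sum>j\<in>UNIV. W $ i $ j) = 1"
    and W_cols: "\<forall>j. (\<Sum>i\<in>UNIV. W $ i $ j) = 1"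
    and W_diag: "\<forall>i. 0 < W $ i $ i"
    and E_sym: "\<forall>i j. E i j \<longleftrightarrow> E j i"
    and E_irrefl: "\<forall>i. \<not> E i i"
    and E_conn: "\<forall>i j. E\<^sup>*\<^sup>* i j"
    and W_edges: "\<forall>i j. i \<noteq> j \<longrightarrow> (0 < W $ i $ j \<longleftrightarrow> E i j)"
    and W_eig1: "dim {v. W *v v = v} = 1"
    and W_eigs: "\<forall>l. is_eigenvalue W l \<and> l \<noteq> 1 \<longrightarrow> -1 < l \<and> l < 1"
    and beta_pos: "0 < second_eig_mag W"
    and mu_pos: "\<forall>i. 0 < \<mu> i"
    and L_pos: "\<forall>i. 0 < Lc i"
    and grad: "\<forall>i z. (f i has_derivative (\<lambda>h. g i z \<bullet> h)) (at z)"
    and sconv: "\<forall>i. strongly_convex (\<mu> i) (f i)"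
    and lipg: "\<forall>i. lipschitz_on (Lc i) UNIV (g i)"
    and xstar_min: "\<forall>z. (\<Sum>i\<in>UNIV. f i xstar) \<le> (\<Sum>i\<in>UNIV. f i z)"
    and u_min: "\<forall>i z. f i (u i) \<le> f i z"
    and iter: "near_dgd_iter W t \<alpha> g s0 x y"
    and alpha_pos: "0 < \<alpha>"
    and alpha_le: "\<alpha> \<le> min (1 / Max (range Lc))
                      (2 / ((\<Sum>i\<in>UNIV. \<mu> i) / real CARD('n) + (\<Sum>i\<in>UNIV. Lc i) / real CARD('n)))"
    and alpha_c2: "\<alpha> * (2 * ((\<Sum>i\<in>UNIV. \<mu> i) / real CARD('n)) * ((\<Sum>i\<in>UNIV. Lc i) / real CARD('n))
                     / ((\<Sum>i\<in>UNIV. \<mu> i) / real CARD('n) + (\<Sum>i\<in>UNIV. Lc i) / real CARD('n))) < 1"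
  shows "let \<beta> = second_eig_mag W;
             L = Max (range Lc);
             mubar = (\<Sum>i\<in>UNIV. \<mu> i) / real CARD('n);
             Lbar = (\<Sum>i\<in>UNIV. Lc i) / real CARD('n);
             c2 = 2 * mubar * Lbar / (mubar + Lbar);
             \<nu> = 2 * \<alpha> * Min (range (\<lambda>i. \<mu> i * Lc i / (\<mu> i + Lc i)));
             D = sqrt (\<Sum>i\<in>UNIV. (norm (s0 - u i))\<^sup>2)
                 + (\<nu> + 4) / \<nu> * sqrt (\<Sum>i\<in>UNIV. (norm (u i))\<^sup>2);
             \<delta> = c2 / (2 * (1 - \<alpha> * c2));
             c1 = sqrt (1 - \<alpha> * c2 / 2);
             c3 = sqrt (\<alpha> * (\<alpha> + 1 / \<delta>)) * D * L
         in \<forall>k i.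
              norm (x k i - xstar) \<le> c1 ^ k * norm (s0 - xstar) + c3 / sqrt (1 - c1\<^sup>2) * \<beta> ^ t + \<beta> ^ t * D
            \<and> norm (y k i - xstar) \<le> c1 ^ k * norm (s0 - xstar) + c3 / sqrt (1 - c1\<^sup>2) * \<beta> ^ t + \<beta> ^ t * D + 2 * D"

proof -
  define \<beta> where "\<beta> = second_eig_mag W"
  define L where "L = Max (range Lc)"
  define mubar where "mubar = (\<Sum>i\<in>UNIV. \<mu> i) / real CARD('n)"
  define Lbar where "Lbar = (\<Sum>i\<in>UNIV. Lc i) / real CARD('n)"
  define c2 where "c2 = 2 * mubar * Lbar / (mubar + Lbar)"
  define \<nu> where "\<nu> = 2 * \<alpha> * Min (range (\<lambda>i. \<mu> i * Lc i / (\<mu> i + Lc i)))"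
  define D where "D = sqrt (\<Sum>i\<in>UNIV. (norm (s0 - u i))\<^sup>2) + (\<nu> + 4) / \<nu> * sqrt (\<Sum>i\<in>UNIV. (norm (u i))\<^sup>2)"
  define \<delta> where "\<delta> = c2 / (2 * (1 - \<alpha> * c2))"
  define c1 where "c1 = sqrt (1 - \<alpha> * c2 / 2)"
  define c3 where "c3 = sqrt (\<alpha> * (\<alpha> + 1 / \<delta>)) * D * L"
  define n where "n = real CARD('n)"
  define A where "A = matpow W t"
  have npos: "0 < n" by (simp add: n_def)
  have y0: "\<And>i. y 0 i = s0" and xd: "\<And>k i. x k i = (\<Sum>j\<in>UNIV. A $ i $ j *\<^sub>R y k j)"
    and yd: "\<And>k i. y (Suc k) i = x k i - \<alpha> *\<^sub>R g i (x k i)"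
    using iter unfolding near_dgd_iter_def A_def by auto
  have Ast: "(\<forall>i j. 0 \<le> A $ i $ j) \<and> (\<forall>i. (\<Sum>j\<in>UNIV. A $ i $ j) = 1) \<and> (\<forall>j. (\<Sum>i\<in>UNIV. A $ i $ j) = 1)"
    unfolding A_def by (rule matpow_stoch[OF W_nonneg W_rows W_cols])
  have bpos: "0 < \<beta>" using beta_pos by (simp add: \<beta>_def)
  have Lge: "\<And>i. Lc i \<le> L" unfolding L_def by (intro Max_ge) auto
  have Lpos: "0 < L" using Lge[of undefined] L_pos by (meson less_le_trans)
  have gradi: "\<And>i. \<forall>z. (f i has_derivative (\<lambda>h. g i z \<bullet> h)) (at z)" using grad by blast
  have muL: "\<And>i. \<mu> i \<le> Lc i" using mu_le_L[OF gradi] sconv lipg by blast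
  have gu: "\<And>i. g i (u i) = 0" using grad_zero[OF gradi] lipg L_pos u_min by blast
  have finR: "finite (range (\<lambda>i. \<mu> i * Lc i / (\<mu> i + Lc i)))" by simp
  have mmin: "0 < Min (range (\<lambda>i. \<mu> i * Lc i / (\<mu> i + Lc i)))"
    using mu_pos L_pos by (subst Min_gr_iff[OF finR]) (auto intro!: divide_pos_pos mult_pos_pos add_pos_pos)
  have nupos: "0 < \<nu>" unfolding \<nu>_def using alpha_pos mmin by simp
  have nule: "\<And>i. \<nu> \<le> 2 * \<alpha> * \<mu> i * Lc i / (\<mu> i + Lc i)"
  proof -
    fix i
    have mle: "Min (range (\<lambda>i. \<mu> i * Lc i / (\<mu> i + Lc i))) \<le> \<mu> i * Lc i / (\<mu> i + Lc i)"
      by (rule Min_le[OF finR]) auto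
    have "\<nu> \<le> 2 * \<alpha> * (\<mu> i * Lc i / (\<mu> i + Lc i))" unfolding \<nu>_def
      using mult_left_mono[OF mle, of "2 * \<alpha>"] alpha_pos by simp
    hence "\<nu> \<le> 2 * \<alpha> * (\<mu> i * Lc i / (\<mu> i + Lc i))" .
    thus "\<nu> \<le> 2 * \<alpha> * \<mu> i * Lc i / (\<mu> i + Lc i)" by simp
  qed
  have aL: "\<And>i. \<alpha> * Lc i \<le> 1"
  proof -
    fix i
    have "\<alpha> \<le> 1 / L" using alpha_le by (simp add: L_def)
    hence "\<alpha> * L \<le> 1" using Lpos by (simp add: field_simps)
    moreover have "\<alpha> * Lc i \<le> \<alpha> * L" using Lge alpha_pos by (simp add: mult_left_mono)
    ultimately show "\<alpha> * Lc i \<le> 1" by simp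
  qed
  have ai: "\<And>i. \<alpha> \<le> 2 / (\<mu> i + Lc i)"
  proof -
    fix i
    have "\<alpha> * (\<mu> i + Lc i) \<le> 2 * (\<alpha> * Lc i)" using muL[of i] alpha_pos by (simp add: algebra_simps)
    also have "\<dots> \<le> 2" using aL[of i] by simp
    finally show "\<alpha> \<le> 2 / (\<mu> i + Lc i)" using mu_pos L_pos by (simp add: field_simps add_pos_pos)
  qed
  have nu1: "\<nu> \<le> 1"
  proof -
    let ?i = "undefined :: 'n"
    have "2 * \<alpha> * \<mu> ?i * Lc ?i / (\<mu> ?i + Lc ?i) = 2 * \<mu> ?i * (\<alpha> * Lc ?i) / (\<mu> ?i + Lc ?i)" by simp
    also have "\<dots> \<le> 2 * \<mu> ?i * 1 / (\<mu> ?i + Lc ?i)"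
      using aL[of ?i] mu_pos L_pos by (intro divide_right_mono mult_left_mono) (auto intro: add_pos_pos less_imp_le)
    also have "\<dots> \<le> 1" using muL[of ?i] mu_pos L_pos by (simp add: field_simps add_pos_pos)
    finally show ?thesis using nule[of ?i] by simp
  qed
  have contr_i: "\<And>i a b. (norm ((a - \<alpha> *\<^sub>R g i a) - (b - \<alpha> *\<^sub>R g i b)))\<^sup>2 \<le> (1 - \<nu>) * (norm (a - b))\<^sup>2"
  proof -
    fix i a b
    have "(norm ((a - \<alpha> *\<^sub>R g i a) - (b - \<alpha> *\<^sub>R g i b)))\<^sup>2
          \<le> (1 - 2 * \<alpha> * \<mu> i * Lc i / (\<mu> i + Lc i)) * (norm (a - b))\<^sup>2"
      using gd_contract[OF gradi] sconv lipg mu_pos L_pos alpha_pos ai by blast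
    also have "\<dots> \<le> (1 - \<nu>) * (norm (a - b))\<^sup>2"
      using nule[of i] by (intro mult_right_mono) auto
    finally show "(norm ((a - \<alpha> *\<^sub>R g i a) - (b - \<alpha> *\<^sub>R g i b)))\<^sup>2 \<le> (1 - \<nu>) * (norm (a - b))\<^sup>2" .
  qed
  define NS where "NS v = L2_set (\<lambda>i. norm (v i)) (UNIV::'n set)" for v :: "'n \<Rightarrow> 'a"
  have NSsq: "\<And>v. (NS v)\<^sup>2 = (\<Sum>i\<in>UNIV. (norm (v i))\<^sup>2)"
    unfolding NS_def L2_set_def by (rule real_sqrt_pow2, rule sum_nonneg) simp
  have NSnn: "\<And>v. 0 \<le> NS v" unfolding NS_def by (rule L2_set_nonneg)
  have NStri: "\<And>v w. NS (\<lambda>i. v i + w i) \<le> NS v + NS w"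
  proof -
    fix v w :: "'n \<Rightarrow> 'a"
    have "NS (\<lambda>i. v i + w i) \<le> L2_set (\<lambda>i. norm (v i) + norm (w i)) UNIV"
      unfolding NS_def by (rule L2_set_mono) (auto intro: norm_triangle_ineq)
    also have "\<dots> \<le> NS v + NS w" unfolding NS_def by (rule L2_set_triangle_ineq)
    finally show "NS (\<lambda>i. v i + w i) \<le> NS v + NS w" .
  qed
  have NSle: "NS v \<le> sqrt c * NS w"
    if "(\<Sum>i\<in>UNIV. (norm (v i))\<^sup>2) \<le> c * (\<Sum>i\<in>UNIV. (norm (w i))\<^sup>2)" for v w c
  proof -
    have "sqrt (\<Sum>i\<in>UNIV. (norm (v i))\<^sup>2) \<le> sqrt (c * (\<Sum>i\<in>UNIV. (norm (w i))\<^sup>2))"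
      using that by (rule real_sqrt_le_mono)
    also have "\<dots> = sqrt c * sqrt (\<Sum>i\<in>UNIV. (norm (w i))\<^sup>2)" by (rule real_sqrt_mult)
    finally show ?thesis unfolding NS_def L2_set_def .
  qed
  have NSA: "\<And>w. NS (\<lambda>i. \<Sum>j\<in>UNIV. A $ i $ j *\<^sub>R w j) \<le> NS w"
  proof -
    fix w :: "'n \<Rightarrow> 'a"
    have "(\<Sum>i\<in>UNIV. (norm (\<Sum>j\<in>UNIV. A $ i $ j *\<^sub>R w j))\<^sup>2) \<le> 1 * (\<Sum>j\<in>UNIV. (norm (w j))\<^sup>2)"
      using ds_bound[of A w] Ast by simp
    from NSle[OF this] show "NS (\<lambda>i. \<Sum>j\<in>UNIV. A $ i $ j *\<^sub>R w j) \<le> NS w" by simp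
  qed
  have NScomp: "\<And>v i. norm (v i) \<le> NS v"
  proof -
    fix v :: "'n \<Rightarrow> 'a" and i
    have "(norm (v i))\<^sup>2 \<le> (\<Sum>i\<in>UNIV. (norm (v i))\<^sup>2)" by (rule member_le_sum) auto
    hence "(norm (v i))\<^sup>2 \<le> (NS v)\<^sup>2" using NSsq by simp
    thus "norm (v i) \<le> NS v" by (rule power2_le_imp_le[OF _ NSnn])
  qed
  define U where "U = NS u"
  define Y where "Y k = NS (\<lambda>i. y k i - u i)" for k
  have Unn: "0 \<le> U" unfolding U_def by (rule NSnn)
  have Ystep: "\<And>k. Y (Suc k) \<le> sqrt (1 - \<nu>) * (Y k + 2 * U)"
  proof -
    fix k
    have e1: "y (Suc k) i - u i = (x k i - \<alpha> *\<^sub>R g i (x k i)) - (u i - \<alpha> *\<^sub>R g i (u i))" for i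
      using yd gu by simp
    have "(\<Sum>i\<in>UNIV. (norm (y (Suc k) i - u i))\<^sup>2) \<le> (\<Sum>i\<in>UNIV. (1 - \<nu>) * (norm (x k i - u i))\<^sup>2)"
      unfolding e1 by (intro sum_mono contr_i)
    hence "Y (Suc k) \<le> sqrt (1 - \<nu>) * NS (\<lambda>i. x k i - u i)"
      unfolding Y_def by (intro NSle) (simp add: sum_distrib_left)
    moreover have "NS (\<lambda>i. x k i - u i) \<le> Y k + 2 * U"
    proof -
      have eq: "(\<lambda>i. x k i - u i) = (\<lambda>i. (\<Sum>j\<in>UNIV. A $ i $ j *\<^sub>R (y k j - u j)) + ((\<Sum>j\<in>UNIV. A $ i $ j *\<^sub>R u j) + (- u i)))"
        by (simp add: xd fun_eq_iff scaleR_diff_right sum_subtractf)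
      have "NS (\<lambda>i. x k i - u i) \<le> NS (\<lambda>i. \<Sum>j\<in>UNIV. A $ i $ j *\<^sub>R (y k j - u j)) + NS (\<lambda>i. (\<Sum>j\<in>UNIV. A $ i $ j *\<^sub>R u j) + (- u i))"
        unfolding eq by (rule NStri)
      also have "NS (\<lambda>i. (\<Sum>j\<in>UNIV. A $ i $ j *\<^sub>R u j) + (- u i)) \<le> NS (\<lambda>i. \<Sum>j\<in>UNIV. A $ i $ j *\<^sub>R u j) + NS (\<lambda>i. - u i)"
        by (rule NStri)
      also have "NS (\<lambda>i. \<Sum>j\<in>UNIV. A $ i $ j *\<^sub>R (y k j - u j)) \<le> Y k" unfolding Y_def by (rule NSA)
      also have "NS (\<lambda>i. \<Sum>j\<in>UNIV. A $ i $ j *\<^sub>R u j) \<le> U" unfolding U_def by (rule NSA)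
      also have "NS (\<lambda>i. - u i) = U" by (simp add: NS_def U_def)
      finally show ?thesis by simp
    qed
    moreover have "sqrt (1 - \<nu>) * NS (\<lambda>i. x k i - u i) \<le> sqrt (1 - \<nu>) * (Y k + 2 * U)"
      using calculation(2) by (rule mult_left_mono) (simp add: nu1)
    ultimately show "Y (Suc k) \<le> sqrt (1 - \<nu>) * (Y k + 2 * U)" by linarith
  qed
  have q1: "sqrt (1 - \<nu>) \<le> 1 - \<nu> / 2"
  proof -
    have "1 - \<nu> \<le> (1 - \<nu> / 2)\<^sup>2" by (simp add: power2_eq_square algebra_simps)
    hence "sqrt (1 - \<nu>) \<le> sqrt ((1 - \<nu> / 2)\<^sup>2)" by (rule real_sqrt_le_mono)
    thus ?thesis using nu1 by simp
  qed
  have Ybnd: "\<And>k. Y k \<le> Y 0 + 4 * U / \<nu>"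
  proof -
    fix k show "Y k \<le> Y 0 + 4 * U / \<nu>"
    proof (induction k)
      case 0 thus ?case using Unn nupos by simp
    next
      case (Suc k)
      define B where "B = Y 0 + 4 * U / \<nu>"
      have Y0nn: "0 \<le> Y 0" by (simp add: Y_def NSnn)
      have Bnn: "0 \<le> B" using Y0nn Unn nupos by (simp add: B_def)
      have nuB: "4 * U \<le> \<nu> * B" using nupos Y0nn by (simp add: B_def field_simps)
      have "Y (Suc k) \<le> sqrt (1 - \<nu>) * (B + 2 * U)"
      proof -
        have "sqrt (1 - \<nu>) * (Y k + 2 * U) \<le> sqrt (1 - \<nu>) * (B + 2 * U)"
          using Suc by (intro mult_left_mono) (simp_all add: B_def nu1)
        thus ?thesis using Ystep[of k] by linarith
      qed
      also have "\<dots> \<le> (1 - \<nu> / 2) * (B + 2 * U)"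
        using q1 Bnn Unn by (intro mult_right_mono) auto
      also have "\<dots> = B + 2 * U - \<nu> * B / 2 - \<nu> * U" by (simp add: algebra_simps)
      also have "\<dots> \<le> B" using nuB mult_nonneg_nonneg[of \<nu> U] nupos Unn by linarith
      finally show ?case by (simp add: B_def)
    qed
  qed
  have Y0eq: "Y 0 = sqrt (\<Sum>i\<in>UNIV. (norm (s0 - u i))\<^sup>2)" by (simp add: Y_def NS_def L2_set_def y0)
  have Ueq: "U = sqrt (\<Sum>i\<in>UNIV. (norm (u i))\<^sup>2)" by (simp add: U_def NS_def L2_set_def)
  have Dnn: "0 \<le> D" unfolding D_def using nupos by (intro add_nonneg_nonneg mult_nonneg_nonneg real_sqrt_ge_zero sum_nonneg) auto
  have NSy: "\<And>k. NS (y k) \<le> D"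
  proof -
    fix k
    have "NS (y k) = NS (\<lambda>i. (y k i - u i) + u i)" by simp
    also have "\<dots> \<le> Y k + U" unfolding Y_def U_def by (rule NStri)
    also have "\<dots> \<le> Y 0 + 4 * U / \<nu> + U" using Ybnd[of k] by simp
    also have "\<dots> = D" unfolding D_def Y0eq[symmetric] Ueq[symmetric] using nupos by (simp add: field_simps)
    finally show "NS (y k) \<le> D" .
  qed
  define xbar where "xbar k = (1 / n) *\<^sub>R (\<Sum>j\<in>UNIV. y k j)" for k
  have Pb: "\<forall>w. norm ((A - Jm) *v w) \<le> \<beta> ^ t * norm w"
    using Pt_bound[OF W_sym W_nonneg W_rows W_cols W_eig1 beta_pos] by (simp add: A_def \<beta>_def)
  have cons: "\<And>k i. norm (x k i - xbar k) \<le> \<beta> ^ t * D"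
  proof -
    fix k i
    have e: "x k i' - xbar k = (\<Sum>j\<in>UNIV. (A - Jm) $ i' $ j *\<^sub>R y k j)" for i'
      by (simp add: xd xbar_def Jm_def n_def scaleR_diff_left sum_subtractf scaleR_sum_right)
    have "(norm (x k i - xbar k))\<^sup>2 \<le> (\<Sum>i'\<in>UNIV. (norm (x k i' - xbar k))\<^sup>2)" by (rule member_le_sum) auto
    also have "\<dots> \<le> (\<beta> ^ t)\<^sup>2 * (\<Sum>j\<in>UNIV. (norm (y k j))\<^sup>2)"
      unfolding e by (rule stack_bound[OF Pb]) (use bpos in simp)
    also have "\<dots> = (\<beta> ^ t * NS (y k))\<^sup>2" by (simp add: power_mult_distrib NSsq)
    finally have sq: "(norm (x k i - xbar k))\<^sup>2 \<le> (\<beta> ^ t * NS (y k))\<^sup>2" .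
    have "norm (x k i - xbar k) \<le> \<beta> ^ t * NS (y k)"
      by (rule power2_le_imp_le[OF sq]) (use bpos NSnn in simp)
    also have "\<dots> \<le> \<beta> ^ t * D" using NSy bpos by (intro mult_left_mono) auto
    finally show "norm (x k i - xbar k) \<le> \<beta> ^ t * D" .
  qed
  have Lnn: "0 \<le> L" using Lpos by simp
  define F where "F z = (1 / n) * (\<Sum>i\<in>UNIV. f i z)" for z
  define G where "G z = (1 / n) *\<^sub>R (\<Sum>i\<in>UNIV. g i z)" for z
  have derF: "\<forall>z. (F has_derivative (\<lambda>h. G z \<bullet> h)) (at z)"
  proof
    fix z
    have "((\<lambda>z. \<Sum>i\<in>UNIV. f i z) has_derivative (\<lambda>h. \<Sum>i\<in>UNIV. g i z \<bullet> h)) (at z)"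
      using grad by (intro has_derivative_sum) auto
    hence "(F has_derivative (\<lambda>h. (1 / n) * (\<Sum>i\<in>UNIV. g i z \<bullet> h))) (at z)"
      unfolding F_def by (rule has_derivative_mult_right)
    moreover have "(\<lambda>h. (1 / n) * (\<Sum>i\<in>UNIV. g i z \<bullet> h)) = (\<lambda>h. G z \<bullet> h)"
      by (simp add: G_def fun_eq_iff inner_sum_left)
    ultimately show "(F has_derivative (\<lambda>h. G z \<bullet> h)) (at z)" by simp
  qed
  have mubar_n: "mubar = (\<Sum>i\<in>UNIV. \<mu> i) / n" by (simp add: mubar_def n_def)
  have Lbar_n: "Lbar = (\<Sum>i\<in>UNIV. Lc i) / n" by (simp add: Lbar_def n_def)
  have mubpos: "0 < mubar" unfolding mubar_n using npos mu_pos by (intro divide_pos_pos sum_pos) auto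
  have Lbpos: "0 < Lbar" unfolding Lbar_n using npos L_pos by (intro divide_pos_pos sum_pos) auto
  have scF: "strongly_convex mubar F"
    unfolding strongly_convex_def
  proof (intro allI impI)
    fix a b :: 'a and th :: real assume th: "0 \<le> th \<and> th \<le> 1"
    have "(\<Sum>i\<in>UNIV. f i (th *\<^sub>R a + (1 - th) *\<^sub>R b))
        \<le> (\<Sum>i\<in>UNIV. th * f i a + (1 - th) * f i b - \<mu> i / 2 * th * (1 - th) * (norm (a - b))\<^sup>2)"
      using sconv th unfolding strongly_convex_def by (intro sum_mono) auto
    also have "\<dots> = th * (\<Sum>i\<in>UNIV. f i a) + (1 - th) * (\<Sum>i\<in>UNIV. f i b)
                   - (\<Sum>i\<in>UNIV. \<mu> i) / 2 * th * (1 - th) * (norm (a - b))\<^sup>2"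
      by (simp add: sum.distrib sum_subtractf sum_distrib_left sum_distrib_right sum_divide_distrib)
    finally have "(1 / n) * (\<Sum>i\<in>UNIV. f i (th *\<^sub>R a + (1 - th) *\<^sub>R b))
        \<le> (1 / n) * (th * (\<Sum>i\<in>UNIV. f i a) + (1 - th) * (\<Sum>i\<in>UNIV. f i b)
                   - (\<Sum>i\<in>UNIV. \<mu> i) / 2 * th * (1 - th) * (norm (a - b))\<^sup>2)"
      using npos by (intro mult_left_mono) auto
    also have "\<dots> = th * F a + (1 - th) * F b - mubar / 2 * th * (1 - th) * (norm (a - b))\<^sup>2"
      unfolding F_def mubar_n using npos by (simp add: field_simps)
    finally show "F (th *\<^sub>R a + (1 - th) *\<^sub>R b) \<le> th * F a + (1 - th) * F b - mubar / 2 * th * (1 - th) * (norm (a - b))\<^sup>2"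
      by (simp add: F_def)
  qed
  have lipG: "lipschitz_on Lbar UNIV G"
  proof (rule lipschitz_onI)
    fix a b :: 'a
    have "dist (G a) (G b) = (1 / n) * norm (\<Sum>i\<in>UNIV. g i a - g i b)"
      using npos by (simp add: G_def dist_norm scaleR_diff_right[symmetric] sum_subtractf)
    also have "\<dots> \<le> (1 / n) * (\<Sum>i\<in>UNIV. Lc i * dist a b)"
    proof (intro mult_left_mono)
      have "norm (\<Sum>i\<in>UNIV. g i a - g i b) \<le> (\<Sum>i\<in>UNIV. norm (g i a - g i b))" by (rule norm_sum)
      also have "\<dots> \<le> (\<Sum>i\<in>UNIV. Lc i * dist a b)"
      proof (rule sum_mono)
        fix i
        show "norm (g i a - g i b) \<le> Lc i * dist a b"
          using lipschitz_onD[OF lipg[rule_format, of i], of a b] by (simp add: dist_norm)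
      qed
      finally show "norm (\<Sum>i\<in>UNIV. g i a - g i b) \<le> (\<Sum>i\<in>UNIV. Lc i * dist a b)" .
    qed (use npos in simp)
    also have "\<dots> = Lbar * dist a b" by (simp add: Lbar_n sum_distrib_right)
    finally show "dist (G a) (G b) \<le> Lbar * dist a b" .
  qed (use Lbpos in simp)
  have Gx: "G xstar = 0"
  proof (rule grad_zero[OF derF lipG Lbpos])
    show "\<forall>z. F xstar \<le> F z" using xstar_min npos by (simp add: F_def divide_right_mono)
  qed
  have ac2: "\<alpha> * c2 < 1" using alpha_c2 by (simp add: c2_def mubar_def Lbar_def)
  have c2pos: "0 < c2" using mubpos Lbpos by (simp add: c2_def)
  have alG: "\<alpha> \<le> 2 / (mubar + Lbar)" using alpha_le by (simp add: mubar_def Lbar_def)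
  define \<rho> where "\<rho> = sqrt (1 - \<alpha> * c2)"
  have contrG: "\<And>a b. norm ((a - \<alpha> *\<^sub>R G a) - (b - \<alpha> *\<^sub>R G b)) \<le> \<rho> * norm (a - b)"
  proof -
    fix a b
    have "(norm ((a - \<alpha> *\<^sub>R G a) - (b - \<alpha> *\<^sub>R G b)))\<^sup>2 \<le> (1 - 2 * \<alpha> * mubar * Lbar / (mubar + Lbar)) * (norm (a - b))\<^sup>2"
      by (rule gd_contract[OF derF scF lipG mubpos Lbpos alpha_pos alG])
    also have "\<dots> = (\<rho> * norm (a - b))\<^sup>2"
      using ac2 by (simp add: \<rho>_def c2_def power_mult_distrib)
    finally show "norm ((a - \<alpha> *\<^sub>R G a) - (b - \<alpha> *\<^sub>R G b)) \<le> \<rho> * norm (a - b)"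
      by (rule power2_le_imp_le) (use ac2 in \<open>simp add: \<rho>_def\<close>)
  qed
  have sx: "\<And>k. (\<Sum>j\<in>UNIV. x k j) = (\<Sum>j\<in>UNIV. y k j)"
  proof -
    fix k
    have "(\<Sum>j\<in>UNIV. x k j) = (\<Sum>j\<in>UNIV. \<Sum>l\<in>UNIV. A $ j $ l *\<^sub>R y k l)" by (simp add: xd)
    also have "\<dots> = (\<Sum>l\<in>UNIV. \<Sum>j\<in>UNIV. A $ j $ l *\<^sub>R y k l)" by (rule sum.swap)
    also have "\<dots> = (\<Sum>l\<in>UNIV. (\<Sum>j\<in>UNIV. A $ j $ l) *\<^sub>R y k l)" by (simp add: scaleR_sum_left)
    also have "\<dots> = (\<Sum>l\<in>UNIV. y k l)" using Ast by simp
    finally show "(\<Sum>j\<in>UNIV. x k j) = (\<Sum>j\<in>UNIV. y k j)" .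
  qed
  define e where "e k = norm (xbar k - xstar)" for k
  define b where "b = \<alpha> * L * \<beta> ^ t * D"
  have bnn: "0 \<le> b" unfolding b_def using alpha_pos Lnn bpos Dnn by simp
  have estep: "\<And>k. e (Suc k) \<le> \<rho> * e k + b"
  proof -
    fix k
    have xs: "xbar (Suc k) = xbar k - \<alpha> *\<^sub>R ((1 / n) *\<^sub>R (\<Sum>j\<in>UNIV. g j (x k j)))"
      by (simp add: xbar_def yd sum_subtractf scaleR_diff_right sx scaleR_sum_right[symmetric])
    have dec: "xbar (Suc k) - xstar = ((xbar k - \<alpha> *\<^sub>R G (xbar k)) - (xstar - \<alpha> *\<^sub>R G xstar))
              - \<alpha> *\<^sub>R ((1 / n) *\<^sub>R (\<Sum>j\<in>UNIV. g j (x k j) - g j (xbar k)))"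
      unfolding xs Gx by (simp add: G_def sum_subtractf scaleR_diff_right algebra_simps)
    have t2: "norm (\<alpha> *\<^sub>R ((1 / n) *\<^sub>R (\<Sum>j\<in>UNIV. g j (x k j) - g j (xbar k)))) \<le> b"
    proof -
      have "norm (\<Sum>j\<in>UNIV. g j (x k j) - g j (xbar k)) \<le> (\<Sum>j\<in>UNIV. norm (g j (x k j) - g j (xbar k)))"
        by (rule norm_sum)
      also have "\<dots> \<le> (\<Sum>j\<in>(UNIV::'n set). L * (\<beta> ^ t * D))"
      proof (rule sum_mono)
        fix j
        have "norm (g j (x k j) - g j (xbar k)) \<le> Lc j * norm (x k j - xbar k)"
          using lipschitz_onD[OF lipg[rule_format, of j], of "x k j" "xbar k"] by (simp add: dist_norm)
        also have "\<dots> \<le> L * (\<beta> ^ t * D)" using Lge[of j] cons[of k j] L_pos Lnn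
          by (intro mult_mono) (auto intro: less_imp_le)
        finally show "norm (g j (x k j) - g j (xbar k)) \<le> L * (\<beta> ^ t * D)" .
      qed
      also have "\<dots> = n * (L * (\<beta> ^ t * D))" by (simp add: n_def)
      finally have "(1 / n) * norm (\<Sum>j\<in>UNIV. g j (x k j) - g j (xbar k)) \<le> (1 / n) * (n * (L * (\<beta> ^ t * D)))"
        using npos by (intro mult_left_mono) auto
      hence "(1 / n) * norm (\<Sum>j\<in>UNIV. g j (x k j) - g j (xbar k)) \<le> L * (\<beta> ^ t * D)" using npos by simp
      hence "\<alpha> * ((1 / n) * norm (\<Sum>j\<in>UNIV. g j (x k j) - g j (xbar k))) \<le> \<alpha> * (L * (\<beta> ^ t * D))"
        using alpha_pos by (intro mult_left_mono) auto
      thus ?thesis using alpha_pos npos by (simp add: b_def mult.assoc)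
    qed
    have "e (Suc k) \<le> norm ((xbar k - \<alpha> *\<^sub>R G (xbar k)) - (xstar - \<alpha> *\<^sub>R G xstar))
              + norm (\<alpha> *\<^sub>R ((1 / n) *\<^sub>R (\<Sum>j\<in>UNIV. g j (x k j) - g j (xbar k))))"
      unfolding e_def dec by (rule norm_triangle_ineq4)
    also have "\<dots> \<le> \<rho> * e k + b" using contrG[of "xbar k" xstar] t2 unfolding e_def by simp
    finally show "e (Suc k) \<le> \<rho> * e k + b" .
  qed
  have e0: "e 0 = norm (s0 - xstar)"
    using npos by (simp add: e_def xbar_def y0 n_def sum_constant_scaleR)
  define K where "K = 1 - c1\<^sup>2"
  define C where "C = (c3 * \<beta> ^ t)\<^sup>2"
  have c1sq: "c1\<^sup>2 = 1 - \<alpha> * c2 / 2"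
  proof -
    have "0 \<le> 1 - \<alpha> * c2 / 2" using ac2 by simp
    thus ?thesis by (simp add: c1_def)
  qed
  have Kpos: "0 < K" using c1sq alpha_pos c2pos by (simp add: K_def)
  have c1nn: "0 \<le> c1" using ac2 by (simp add: c1_def)
  have dpos: "0 < \<delta>" unfolding \<delta>_def using c2pos ac2 by simp
  have c3nn: "0 \<le> c3" unfolding c3_def using Dnn Lnn dpos alpha_pos
    by (intro mult_nonneg_nonneg real_sqrt_ge_zero) auto
  have esq: "\<And>k. (e (Suc k))\<^sup>2 \<le> c1\<^sup>2 * (e k)\<^sup>2 + C"
  proof -
    fix k
    have ad: "0 < \<alpha> * \<delta>" using alpha_pos c2pos ac2 by (simp add: \<delta>_def)
    have "(e (Suc k))\<^sup>2 \<le> (\<rho> * e k + b)\<^sup>2" using estep[of k] by (intro power_mono) (auto simp: e_def)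
    also have "\<dots> \<le> (1 + \<alpha> * \<delta>) * (\<rho> * e k)\<^sup>2 + (1 + 1 / (\<alpha> * \<delta>)) * b\<^sup>2" by (rule young_sq[OF ad])
    also have "(1 + \<alpha> * \<delta>) * (\<rho> * e k)\<^sup>2 = c1\<^sup>2 * (e k)\<^sup>2"
    proof -
      have "\<rho>\<^sup>2 = 1 - \<alpha> * c2" using ac2 by (simp add: \<rho>_def)
      moreover have "(1 + \<alpha> * \<delta>) * (1 - \<alpha> * c2) = 1 - \<alpha> * c2 / 2"
        using ac2 by (simp add: \<delta>_def field_simps)
      ultimately show ?thesis using c1sq by (simp add: power_mult_distrib)
    qed
    also have "(1 + 1 / (\<alpha> * \<delta>)) * b\<^sup>2 = C"
    proof -
      have d0: "\<delta> \<noteq> 0" using ad by auto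
      have "c3\<^sup>2 = \<alpha> * (\<alpha> + 1 / \<delta>) * D\<^sup>2 * L\<^sup>2"
        unfolding c3_def using alpha_pos dpos by (simp add: power_mult_distrib)
      have k: "(1 + 1 / (\<alpha> * \<delta>)) * \<alpha>\<^sup>2 = \<alpha> * (\<alpha> + 1 / \<delta>)"
        using alpha_pos d0 by (simp add: field_simps power2_eq_square)
      have "(1 + 1 / (\<alpha> * \<delta>)) * b\<^sup>2 = ((1 + 1 / (\<alpha> * \<delta>)) * \<alpha>\<^sup>2) * D\<^sup>2 * L\<^sup>2 * (\<beta> ^ t)\<^sup>2"
        by (simp add: b_def power_mult_distrib)
      also have "\<dots> = c3\<^sup>2 * (\<beta> ^ t)\<^sup>2" unfolding k \<open>c3\<^sup>2 = _\<close> by simp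
      finally show ?thesis by (simp add: C_def power_mult_distrib)
    qed
    finally show "(e (Suc k))\<^sup>2 \<le> c1\<^sup>2 * (e k)\<^sup>2 + C" .
  qed
  have eind: "\<And>k. (e k)\<^sup>2 \<le> (c1 ^ k)\<^sup>2 * (e 0)\<^sup>2 + C / K"
  proof -
    fix k show "(e k)\<^sup>2 \<le> (c1 ^ k)\<^sup>2 * (e 0)\<^sup>2 + C / K"
    proof (induction k)
      case 0 show ?case using Kpos by (simp add: C_def)
    next
      case (Suc k)
      have "(e (Suc k))\<^sup>2 \<le> c1\<^sup>2 * (e k)\<^sup>2 + C" by (rule esq)
      also have "\<dots> \<le> c1\<^sup>2 * ((c1 ^ k)\<^sup>2 * (e 0)\<^sup>2 + C / K) + C"
        using Suc by (intro add_right_mono mult_left_mono) auto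
      also have "\<dots> = (c1 ^ Suc k)\<^sup>2 * (e 0)\<^sup>2 + C / K"
        using Kpos by (simp add: K_def field_simps power_mult_distrib power2_eq_square)
      finally show ?case .
    qed
  qed
  have ebnd: "\<And>k. e k \<le> c1 ^ k * norm (s0 - xstar) + c3 / sqrt (1 - c1\<^sup>2) * \<beta> ^ t"
  proof -
    fix k
    have "e k = sqrt ((e k)\<^sup>2)" by (simp add: e_def)
    also have "\<dots> \<le> sqrt ((c1 ^ k)\<^sup>2 * (e 0)\<^sup>2 + C / K)" by (rule real_sqrt_le_mono[OF eind])
    also have "\<dots> \<le> sqrt ((c1 ^ k)\<^sup>2 * (e 0)\<^sup>2) + sqrt (C / K)"
      using Kpos by (intro sqrt_add_le_add_sqrt) (auto simp: C_def)
    also have "sqrt ((c1 ^ k)\<^sup>2 * (e 0)\<^sup>2) = c1 ^ k * norm (s0 - xstar)"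
      using c1nn by (simp add: e0 real_sqrt_mult)
    also have "sqrt (C / K) = c3 / sqrt (1 - c1\<^sup>2) * \<beta> ^ t"
      using c3nn bpos by (simp add: C_def K_def real_sqrt_divide)
    finally show "e k \<le> c1 ^ k * norm (s0 - xstar) + c3 / sqrt (1 - c1\<^sup>2) * \<beta> ^ t" .
  qed
  have fin: "\<forall>k i. norm (x k i - xstar) \<le> c1 ^ k * norm (s0 - xstar) + c3 / sqrt (1 - c1\<^sup>2) * \<beta> ^ t + \<beta> ^ t * D
            \<and> norm (y k i - xstar) \<le> c1 ^ k * norm (s0 - xstar) + c3 / sqrt (1 - c1\<^sup>2) * \<beta> ^ t + \<beta> ^ t * D + 2 * D"
  proof (intro allI conjI)
    fix k i
    have "x k i - xstar = (xbar k - xstar) + (x k i - xbar k)" by simp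
    hence "norm (x k i - xstar) \<le> e k + norm (x k i - xbar k)"
      unfolding e_def by (metis norm_triangle_ineq)
    thus "norm (x k i - xstar) \<le> c1 ^ k * norm (s0 - xstar) + c3 / sqrt (1 - c1\<^sup>2) * \<beta> ^ t + \<beta> ^ t * D"
      using ebnd[of k] cons[of k i] by linarith
    have xbn: "norm (xbar k) \<le> NS (y k)"
    proof -
      have "norm (xbar k) \<le> (1 / n) * (\<Sum>j\<in>UNIV. norm (y k j))"
        using npos norm_sum[of "y k" UNIV] by (simp add: xbar_def divide_right_mono)
      also have "\<dots> \<le> (1 / n) * (\<Sum>j\<in>(UNIV::'n set). NS (y k))"
        using npos by (intro mult_left_mono sum_mono NScomp) auto
      also have "\<dots> = NS (y k)" using npos by (simp add: n_def)
      finally show ?thesis .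
    qed
    have "y k i - xstar = (xbar k - xstar) + (y k i - xbar k)" by simp
    hence "norm (y k i - xstar) \<le> e k + norm (y k i - xbar k)"
      unfolding e_def by (metis norm_triangle_ineq)
    also have "norm (y k i - xbar k) \<le> norm (y k i) + norm (xbar k)" by (rule norm_triangle_ineq4)
    finally have "norm (y k i - xstar) \<le> e k + 2 * D"
      using NScomp[of "y k" i] xbn NSy[of k] by linarith
    moreover have "0 \<le> \<beta> ^ t * D" using bpos Dnn by simp
    ultimately show "norm (y k i - xstar) \<le> c1 ^ k * norm (s0 - xstar) + c3 / sqrt (1 - c1\<^sup>2) * \<beta> ^ t + \<beta> ^ t * D + 2 * D"
      using ebnd[of k] by linarith
  qed
  show ?thesis unfolding Let_def using fin
    unfolding \<beta>_def L_def mubar_def Lbar_def c2_def \<nu>_def D_def \<delta>_def c1_def c3_def .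
qed

end
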